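(* Let $g\in\mathrm{Sp}(1,1)$. Then every element of $g\,\mathrm{SU}(1,1)\,g^{-1}$ has real trace if and only if $g\in\mathrm{Sp}(1)\cdot\mathrm{SU}(1,1)$, i.e. $g=(hI_2)u$ for some unit quaternion $h$ and some $u\in\mathrm{SU}(1,1)$.
   Context: $\mathbb H$ denotes the quaternions. $\mathrm{Sp}(1,1)=\{A\in\mathrm{GL}(2,\mathbb H): A^*I_{1,1}A=I_{1,1}\}$, with $A^*$ the conjugate transpose and $I_{1,1}=\mathrm{diag}(1,-1)$. $\mathrm{SU}(1,1)\subset\mathrm{Sp}(1,1)$ is the subgroup of complex matrices of determinant $1$ preserving $I_{1,1}$. $\mathrm{Sp}(1)$ is the group of unit quaternions, and $h\in\mathrm{Sp}(1)$ is identified with the scalar matrix $hI_2\in\mathrm{Sp}(1,1)$. The trace of a quaternionic matrix is the sum of its diagonal entries. *)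

theory Defs
  imports Complex_Main
begin

datatype quat = Quat (qre: real) (qi: real) (qj: real) (qk: real)

definition qadd :: "quat \<Rightarrow> quat \<Rightarrow> quat" where
  "qadd p q = Quat (qre p + qre q) (qi p + qi q) (qj p + qj q) (qk p + qk q)"

text \<open>Hamilton product (i^2 = j^2 = k^2 = ijk = -1).\<close>
definition qmult :: "quat \<Rightarrow> quat \<Rightarrow> quat" where
  "qmult p q = Quat
     (qre p * qre q - qi p * qi q - qj p * qj q - qk p * qk q)
     (qre p * qi q + qi p * qre q + qj p * qk q - qk p * qj q)
     (qre p * qj q - qi p * qk q + qj p * qre q + qk p * qi q)
     (qre p * qk q + qi p * qj q - qj p * qi q + qk p * qre q)"

definition qcnj :: "quat \<Rightarrow> quat" where
  "qcnj q = Quat (qre q) (- qi q) (- qj q) (- qk q)"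

definition qzero :: quat where "qzero = Quat 0 0 0 0"
definition qone :: quat where "qone = Quat 1 0 0 0"
definition qneg :: "quat \<Rightarrow> quat" where
  "qneg q = Quat (- qre q) (- qi q) (- qj q) (- qk q)"

definition quat_of_complex :: "complex \<Rightarrow> quat" where
  "quat_of_complex z = Quat (Re z) (Im z) 0 0"

definition quat_is_real :: "quat \<Rightarrow> bool" where
  "quat_is_real q \<longleftrightarrow> qi q = 0 \<and> qj q = 0 \<and> qk q = 0"

definition Sp1 :: "quat set" where
  "Sp1 = {q. (qre q)\<^sup>2 + (qi q)\<^sup>2 + (qj q)\<^sup>2 + (qk q)\<^sup>2 = 1}"

datatype qmat = QM (m11: quat) (m12: quat) (m21: quat) (m22: quat)

definition qmmult :: "qmat \<Rightarrow> qmat \<Rightarrow> qmat" where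
  "qmmult A B = QM
     (qadd (qmult (m11 A) (m11 B)) (qmult (m12 A) (m21 B)))
     (qadd (qmult (m11 A) (m12 B)) (qmult (m12 A) (m22 B)))
     (qadd (qmult (m21 A) (m11 B)) (qmult (m22 A) (m21 B)))
     (qadd (qmult (m21 A) (m12 B)) (qmult (m22 A) (m22 B)))"

definition qmstar :: "qmat \<Rightarrow> qmat" where
  "qmstar A = QM (qcnj (m11 A)) (qcnj (m21 A)) (qcnj (m12 A)) (qcnj (m22 A))"

definition qmid :: qmat where "qmid = QM qone qzero qzero qone"

definition I11 :: qmat where "I11 = QM qone qzero qzero (qneg qone)"

definition qscalar :: "quat \<Rightarrow> qmat" where "qscalar h = QM h qzero qzero h"

definition qmtrace :: "qmat \<Rightarrow> quat" where "qmtrace A = qadd (m11 A) (m22 A)"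

definition qminv :: "qmat \<Rightarrow> qmat" where
  "qminv A = (THE B. qmmult A B = qmid \<and> qmmult B A = qmid)"

definition invertible_qmat :: "qmat \<Rightarrow> bool" where
  "invertible_qmat A \<longleftrightarrow> (\<exists>B. qmmult A B = qmid \<and> qmmult B A = qmid)"

definition Sp11 :: "qmat set" where
  "Sp11 = {A. invertible_qmat A \<and> qmmult (qmmult (qmstar A) I11) A = I11}"

definition SU11 :: "qmat set" where
  "SU11 = {A. \<exists>a b c d :: complex.
      A = QM (quat_of_complex a) (quat_of_complex b) (quat_of_complex c) (quat_of_complex d)
      \<and> a * d - b * c = 1
      \<and> qmmult (qmmult (qmstar A) I11) A = I11}"

end

theory Submission
  imports Defs
begin


lemma quat_eq_iff: "p = q \<longleftrightarrow> qre p = qre q \<and> qi p = qi q \<and> qj p = qj q \<and> qk p = qk q"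
  by (cases p; cases q) auto

instantiation quat :: ring_1
begin
definition "zero_quat = qzero"
definition "one_quat = qone"
definition "plus_quat = qadd"
definition "times_quat = qmult"
definition "uminus_quat = qneg"
definition "minus_quat p q = qadd p (qneg q)"
instance
  by standard (auto simp: quat_eq_iff zero_quat_def one_quat_def plus_quat_def times_quat_def
      uminus_quat_def minus_quat_def qzero_def qone_def qadd_def qmult_def qneg_def algebra_simps)
end

lemma qsel_simps[simp]:
  "qre (p + q) = qre p + qre q" "qi (p + q) = qi p + qi q" "qj (p + q) = qj p + qj q" "qk (p + q) = qk p + qk q"
  "qre (p - q) = qre p - qre q" "qi (p - q) = qi p - qi q" "qj (p - q) = qj p - qj q" "qk (p - q) = qk p - qk q"
  "qre (- q) = - qre q" "qi (- q) = - qi q" "qj (- q) = - qj q" "qk (- q) = - qk q"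
  "qre 0 = 0" "qi 0 = 0" "qj 0 = 0" "qk 0 = 0" "qre 1 = 1" "qi 1 = 0" "qj 1 = 0" "qk 1 = 0"
  "qre (p * q) = qre p * qre q - qi p * qi q - qj p * qj q - qk p * qk q"
  "qi (p * q) = qre p * qi q + qi p * qre q + qj p * qk q - qk p * qj q"
  "qj (p * q) = qre p * qj q - qi p * qk q + qj p * qre q + qk p * qi q"
  "qk (p * q) = qre p * qk q + qi p * qj q - qj p * qi q + qk p * qre q"
  "qre (qcnj q) = qre q" "qi (qcnj q) = - qi q" "qj (qcnj q) = - qj q" "qk (qcnj q) = - qk q"
  by (simp_all add: zero_quat_def one_quat_def plus_quat_def times_quat_def
      uminus_quat_def minus_quat_def qzero_def qone_def qadd_def qmult_def qneg_def qcnj_def)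

lemma qops: "qadd p q = p + q" "qmult p q = p * q" "qneg p = - p" "qzero = 0" "qone = 1"
  by (simp_all add: zero_quat_def one_quat_def plus_quat_def times_quat_def uminus_quat_def)

definition nsq :: "quat \<Rightarrow> real" where "nsq q = (qre q)\<^sup>2 + (qi q)\<^sup>2 + (qj q)\<^sup>2 + (qk q)\<^sup>2"
definition qr :: "real \<Rightarrow> quat" where "qr t = Quat t 0 0 0"
definition qI :: quat where "qI = Quat 0 1 0 0"

lemma qr_sel[simp]: "qre (qr t) = t" "qi (qr t) = 0" "qj (qr t) = 0" "qk (qr t) = 0"
  "qre qI = 0" "qi qI = 1" "qj qI = 0" "qk qI = 0"
  by (simp_all add: qr_def qI_def)

lemma qoc_sel[simp]: "qre (quat_of_complex z) = Re z" "qi (quat_of_complex z) = Im z"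
   "qj (quat_of_complex z) = 0" "qk (quat_of_complex z) = 0"
  by (simp_all add: quat_of_complex_def)

lemma cnj_mult: "qcnj (a * b) = qcnj b * qcnj a" by (simp add: quat_eq_iff algebra_simps)
lemma cnj_cnj[simp]: "qcnj (qcnj a) = a" by (simp add: quat_eq_iff)
lemma cnj_add: "qcnj (a + b) = qcnj a + qcnj b" by (simp add: quat_eq_iff)
lemma cnj_diff: "qcnj (a - b) = qcnj a - qcnj b" by (simp add: quat_eq_iff)
lemma cnj_neg: "qcnj (- b) = - qcnj b" by (simp add: quat_eq_iff)
lemma mult_cnj: "a * qcnj a = qr (nsq a)" by (simp add: quat_eq_iff nsq_def algebra_simps power2_eq_square)
lemma cnj_mult': "qcnj a * a = qr (nsq a)" by (simp add: quat_eq_iff nsq_def algebra_simps power2_eq_square)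
lemma qr_comm: "qr t * a = a * qr t" by (simp add: quat_eq_iff)
lemma qr_mult: "qr s * qr t = qr (s * t)" by (simp add: quat_eq_iff)
lemma qr_add: "qr s + qr t = qr (s + t)" by (simp add: quat_eq_iff)
lemma qr_1: "qr 1 = 1" and qr_0: "qr 0 = 0" by (simp_all add: quat_eq_iff)
lemma nsq_mult: "nsq (a * b) = nsq a * nsq b" by (simp add: nsq_def algebra_simps power2_eq_square)
lemma nsq_nonneg: "nsq a \<ge> 0" by (simp add: nsq_def)
lemma nsq_zero: "nsq a = 0 \<longleftrightarrow> a = 0" by (simp add: nsq_def quat_eq_iff add_nonneg_eq_0_iff)



lemma qmmult_assoc: "qmmult (qmmult A B) C = qmmult A (qmmult B C)"
  apply (simp add: qmmult_def qops)
  apply (simp only: distrib_left distrib_right mult.assoc)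
  apply (simp only: add_ac)
  done

lemma qmid_l: "qmmult qmid A = A" and qmid_r: "qmmult A qmid = A"
  by (cases A, simp add: qmmult_def qmid_def qops)+

definition Jm :: "qmat \<Rightarrow> qmat" where
  "Jm g = QM (qcnj (m11 g)) (- qcnj (m21 g)) (- qcnj (m12 g)) (qcnj (m22 g))"

lemma Jm_eq: "Jm g = qmmult (qmmult I11 (qmstar g)) I11"
  by (simp add: Jm_def qmmult_def I11_def qmstar_def qops)

lemma I11_sq: "qmmult I11 I11 = qmid"
  by (simp add: qmmult_def I11_def qmid_def qops)

lemma Jm_left: assumes "qmmult (qmmult (qmstar g) I11) g = I11"
  shows "qmmult (Jm g) g = qmid"
proof -
  have "qmmult (Jm g) g = qmmult I11 (qmmult (qmmult (qmstar g) I11) g)"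
    by (simp add: Jm_eq qmmult_assoc)
  also have "\<dots> = qmid" using assms I11_sq by simp
  finally show ?thesis .
qed

lemma Sp11_inv: assumes "g \<in> Sp11"
  shows "qmmult (Jm g) g = qmid" "qmmult g (Jm g) = qmid" "qminv g = Jm g"
proof -
  have S: "qmmult (qmmult (qmstar g) I11) g = I11" and "invertible_qmat g" using assms by (auto simp: Sp11_def)
  then obtain B where B: "qmmult g B = qmid" "qmmult B g = qmid" by (auto simp: invertible_qmat_def)
  show L: "qmmult (Jm g) g = qmid" using Jm_left[OF S] .
  have uniq: "B' = Jm g" if "qmmult g B' = qmid" for B'
  proof -
    have "B' = qmmult (qmmult (Jm g) g) B'" using L qmid_l by simp
    also have "\<dots> = Jm g" using that qmid_r by (simp add: qmmult_assoc)
    finally show ?thesis .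
  qed
  have "B = Jm g" using uniq B by blast
  then show R: "qmmult g (Jm g) = qmid" using B by simp
  show "qminv g = Jm g" unfolding qminv_def
  proof (rule the_equality)
    show "qmmult g (Jm g) = qmid \<and> qmmult (Jm g) g = qmid" using L R by blast
    show "\<And>B'. qmmult g B' = qmid \<and> qmmult B' g = qmid \<Longrightarrow> B' = Jm g" using uniq by blast
  qed
qed


abbreviation qoc where "qoc \<equiv> quat_of_complex"

lemma qoc_mult: "qoc a * qoc b = qoc (a * b)" by (simp add: quat_eq_iff)
lemma qoc_add: "qoc a + qoc b = qoc (a + b)" by (simp add: quat_eq_iff)
lemma qoc_diff: "qoc a - qoc b = qoc (a - b)" by (simp add: quat_eq_iff)
lemma qoc_neg: "- qoc a = qoc (- a)" by (simp add: quat_eq_iff)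
lemma qoc_cnj: "qcnj (qoc a) = qoc (cnj a)" by (simp add: quat_eq_iff)
lemma qoc_1: "1 = qoc 1" and qoc_0: "0 = qoc 0" by (simp_all add: quat_eq_iff)
lemma qoc_inj: "qoc a = qoc b \<longleftrightarrow> a = b" by (simp add: quat_eq_iff complex_eq_iff)
lemmas qoc_simps = qoc_mult qoc_add qoc_diff qoc_neg qoc_cnj

lemma star_I_cx:
  "qmmult (qmmult (qmstar (QM (qoc a) (qoc b) (qoc c) (qoc d))) I11) (QM (qoc a) (qoc b) (qoc c) (qoc d))
   = QM (qoc (cnj a * a - cnj c * c)) (qoc (cnj a * b - cnj c * d)) (qoc (cnj b * a - cnj d * c)) (qoc (cnj b * b - cnj d * d))"
  by (simp add: qmmult_def qmstar_def I11_def qops quat_eq_iff algebra_simps)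

lemma I11_cx: "I11 = QM (qoc 1) (qoc 0) (qoc 0) (qoc (-1))"
  by (simp add: I11_def qops quat_eq_iff)

lemma su_complex: assumes "cnj a * a - cnj c * c = 1" "cnj a * b - cnj c * d = 0" "cnj b * a - cnj d * c = 0" "a*d - b*c = 1"
  shows "d = cnj a" "c = cnj b"
proof -
  have "cnj a = cnj a * (a*d - b*c)" using assms(4) by simp
  also have "\<dots> = d * (cnj a * a) - c * (cnj a * b)" by (simp add: algebra_simps)
  also have "\<dots> = d * (cnj a * a) - c * (cnj c * d)" using assms(2) by (simp add: algebra_simps)
  also have "\<dots> = d * (cnj a * a - cnj c * c)" by (simp add: algebra_simps)
  finally show dd: "d = cnj a" using assms(1) by simp
  have "a \<noteq> 0"
  proof
    assume "a = 0"
    then have "Im c * Im c + Re c * Re c = -1" using assms(1) by (simp add: algebra_simps complex_eq_iff)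
    moreover have "Im c * Im c + Re c * Re c \<ge> 0" by simp
    ultimately show False by simp
  qed
  have "a * (c - cnj b) = 0" using assms(3) dd by (simp add: algebra_simps) (metis complex_cnj_cnj complex_cnj_mult mult.commute)
  then show "c = cnj b" using \<open>a \<noteq> 0\<close> by simp
qed

lemma SU11_D: assumes "u \<in> SU11"
  obtains a b where "u = QM (qoc a) (qoc b) (qoc (cnj b)) (qoc (cnj a))"
    "cnj a * a - cnj b * b = 1"
proof -
  obtain a b c d where u: "u = QM (qoc a) (qoc b) (qoc c) (qoc d)" "a*d - b*c = 1"
    "qmmult (qmmult (qmstar u) I11) u = I11" using assms by (auto simp: SU11_def)
  have E: "cnj a * a - cnj c * c = 1" "cnj a * b - cnj c * d = 0" "cnj b * a - cnj d * c = 0"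
    "cnj b * b - cnj d * d = -1"
    using u(3) unfolding u(1) unfolding star_I_cx unfolding I11_cx by (simp_all add: qoc_inj)
  note S = su_complex[OF E(1-3) u(2)]
  show ?thesis using that[of a b] u(1) E(1) S by (simp add: mult.commute)
qed


lemma qr_is_real: "quat_is_real (qr t)" by (simp add: quat_is_real_def)

lemma backward:
  assumes g: "g \<in> Sp11" and u: "u \<in> SU11" and gh: "g = qmmult (qscalar h) u" and v: "v \<in> SU11"
  shows "quat_is_real (qmtrace (qmmult (qmmult g v) (qminv g)))"
proof -
  obtain a b where ua: "u = QM (qoc a) (qoc b) (qoc (cnj b)) (qoc (cnj a))" using SU11_D[OF u] by blast
  obtain e f where ve: "v = QM (qoc e) (qoc f) (qoc (cnj f)) (qoc (cnj e))" using SU11_D[OF v] by blast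
  have gq: "g = QM (h * qoc a) (h * qoc b) (h * qoc (cnj b)) (h * qoc (cnj a))"
    using gh ua by (simp add: qmmult_def qscalar_def qops)
  define X where "X = (qoc a * qoc e + qoc b * qoc (cnj f)) * qoc (cnj a)
     - (qoc a * qoc f + qoc b * qoc (cnj e)) * qoc (cnj b)
     - (qoc (cnj b) * qoc e + qoc (cnj a) * qoc (cnj f)) * qoc b
     + (qoc (cnj b) * qoc f + qoc (cnj a) * qoc (cnj e)) * qoc a"
  have T: "qmtrace (qmmult (qmmult g v) (qminv g)) = h * X * qcnj h"
    unfolding Sp11_inv(3)[OF g] unfolding gq ve X_def
    by (simp add: Jm_def qmtrace_def qmmult_def qops cnj_mult qoc_cnj algebra_simps)
  define \<tau> where "\<tau> = (a * e + b * cnj f) * cnj a - (a * f + b * cnj e) * cnj b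
     - (cnj b * e + cnj a * cnj f) * b + (cnj b * f + cnj a * cnj e) * a"
  have X: "X = qoc \<tau>" unfolding X_def \<tau>_def by (simp add: qoc_simps)
  have "Im \<tau> = 0" unfolding \<tau>_def by (simp add: algebra_simps)
  then have "qoc \<tau> = qr (Re \<tau>)" by (simp add: quat_eq_iff)
  then have "h * X * qcnj h = h * qr (Re \<tau>) * qcnj h" by (simp add: X)
  also have "\<dots> = qr (Re \<tau>) * (h * qcnj h)" by (simp add: qr_comm mult.assoc)
  also have "\<dots> = qr (Re \<tau> * nsq h)" by (simp add: mult_cnj qr_mult)
  finally have "h * X * qcnj h = qr (Re \<tau> * nsq h)" .
  then show ?thesis using T qr_is_real by simp
qed



lemma U11_det:
  fixes a b c d :: complex
  assumes E1: "cnj a * a - cnj c * c = 1" and E2: "cnj a * b - cnj c * d = 0"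
    and E4: "cnj b * b - cnj d * d = -1"
  shows "cmod (a * d - b * c) = 1"
proof -
  define D where "D = a * d - b * c"
  have "cnj a * D = d * (cnj a * a) - c * (cnj a * b)" by (simp add: D_def algebra_simps)
  also have "\<dots> = d * (cnj a * a) - c * (cnj c * d)" using E2 by (simp add: algebra_simps)
  also have "\<dots> = d * (cnj a * a - cnj c * c)" by (simp add: algebra_simps)
  finally have dD: "cnj a * D = d" using E1 by simp
  have sq: "\<And>z::complex. cnj z * z = of_real ((cmod z)\<^sup>2)"
    by (metis complex_norm_square mult.commute of_real_power)
  have r1: "(cmod a)\<^sup>2 - (cmod c)\<^sup>2 = 1" using arg_cong[OF E1, of Re] by (simp add: sq)
  have r4: "(cmod b)\<^sup>2 - (cmod d)\<^sup>2 = -1" using arg_cong[OF E4, of Re] by (simp add: sq)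
  have r2: "cmod a * cmod b = cmod c * cmod d"
  proof -
    have "cnj a * b = cnj c * d" using E2 by simp
    then have "cmod (cnj a * b) = cmod (cnj c * d)" by simp
    then show ?thesis by (simp add: norm_mult)
  qed
  have r3: "cmod a * cmod D = cmod d" using arg_cong[OF dD, of cmod] by (simp add: norm_mult)
  have "(cmod a)\<^sup>2 * (cmod b)\<^sup>2 = (cmod c)\<^sup>2 * (cmod d)\<^sup>2" using r2
    by (metis power_mult_distrib)
  then have "(1 + (cmod c)\<^sup>2) * (cmod b)\<^sup>2 = (cmod c)\<^sup>2 * (1 + (cmod b)\<^sup>2)"
    using r1 r4 by (smt (verit))
  then have bc: "(cmod b)\<^sup>2 = (cmod c)\<^sup>2" by (simp add: algebra_simps)
  then have ad: "(cmod d)\<^sup>2 = (cmod a)\<^sup>2" using r1 r4 by linarith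
  have "(cmod a)\<^sup>2 * (cmod D)\<^sup>2 = (cmod a)\<^sup>2" using r3 ad by (metis power_mult_distrib)
  moreover have "(cmod a)\<^sup>2 \<noteq> 0" using r1 by (smt (verit) zero_le_power2)
  ultimately have "(cmod D)\<^sup>2 = 1" by simp
  then show ?thesis unfolding D_def[symmetric] using norm_ge_zero[of D] by (auto simp add: power2_eq_1_iff)
qed


lemma nsq_qoc: "nsq (qoc w) = (cmod w)\<^sup>2"
  by (simp add: nsq_def cmod_def)

lemma assemble:
  assumes h0: "nsq h0 = 1"
    and g: "g = qmmult (qscalar h0) (QM (qoc a) (qoc b) (qoc c) (qoc d))"
    and S: "qmmult (qmmult (qmstar (QM (qoc a) (qoc b) (qoc c) (qoc d))) I11) (QM (qoc a) (qoc b) (qoc c) (qoc d)) = I11"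
  shows "\<exists>h\<in>Sp1. \<exists>u\<in>SU11. g = qmmult (qscalar h) u"
proof -
  have E: "cnj a * a - cnj c * c = 1" "cnj a * b - cnj c * d = 0" "cnj b * a - cnj d * c = 0"
    "cnj b * b - cnj d * d = -1"
    using S unfolding star_I_cx unfolding I11_cx by (simp_all add: qoc_inj)
  define D where "D = a * d - b * c"
  have cD: "cmod D = 1" unfolding D_def using U11_det[OF E(1) E(2) E(4)] .
  define w where "w = csqrt D"
  have w2: "w * w = D" unfolding w_def by (metis power2_csqrt power2_eq_square)
  have "cmod w * cmod w = 1" using arg_cong[OF w2, of cmod] cD by (simp add: norm_mult)
  then have cw: "cmod w = 1" by (metis abs_norm_cancel mult_cancel_right1 norm_ge_zero abs_of_nonneg
        real_sqrt_abs real_sqrt_mult_self real_sqrt_one power2_eq_square)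
  then have w0: "w \<noteq> 0" by auto
  have ww: "cnj w * w = 1"
    by (metis complex_norm_square cw mult.commute of_real_1 power_one)
  define u where "u = QM (qoc (a / w)) (qoc (b / w)) (qoc (c / w)) (qoc (d / w))"
  define h where "h = h0 * qoc w"
  have "h \<in> Sp1" unfolding Sp1_def h_def using h0 cw
    by (simp add: nsq_mult nsq_qoc flip: nsq_def)
  moreover have "u \<in> SU11"
  proof -
    have det: "a / w * (d / w) - b / w * (c / w) = 1"
      using w2 w0 unfolding D_def by (simp add: field_simps)
    have sc: "cnj (x / w) * (y / w) = cnj x * y" for x y
    proof -
      have "cnj (x / w) * (y / w) = (cnj x * y) / (cnj w * w)" by (simp add: field_simps)
      then show ?thesis using ww by simp
    qed
    have "qmmult (qmmult (qmstar u) I11) u = I11"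
      unfolding u_def unfolding star_I_cx unfolding I11_cx
      using E by (simp only: sc)
    then show ?thesis unfolding SU11_def u_def using det by blast
  qed
  moreover have "g = qmmult (qscalar h) u"
  proof -
    have k: "qoc w * qoc (x / w) = qoc x" for x using w0 by (simp add: qoc_mult)
    show ?thesis unfolding g u_def h_def
      by (simp add: qmmult_def qscalar_def qops mult.assoc k)
  qed
  ultimately show ?thesis by blast
qed



definition iscx :: "quat \<Rightarrow> bool" where "iscx w \<longleftrightarrow> qj w = 0 \<and> qk w = 0"

lemma real_qr: "quat_is_real A \<Longrightarrow> A = qr (qre A)"
  by (simp add: quat_is_real_def quat_eq_iff)

lemma H_comm: "quat_is_real (a * b - b * a) \<Longrightarrow> a * b = b * a"
  by (simp add: quat_is_real_def quat_eq_iff algebra_simps)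

lemma H_conj: "quat_is_real A \<Longrightarrow> quat_is_real (qcnj p * A * p)"
proof -
  assume "quat_is_real A"
  then have "qcnj p * A * p = qcnj p * qr (qre A) * p" using real_qr by metis
  also have "\<dots> = qr (qre A) * (qcnj p * p)" by (simp add: qr_comm mult.assoc)
  also have "\<dots> = qr (qre A * nsq p)" by (simp add: cnj_mult' qr_mult)
  finally show ?thesis by (simp add: qr_is_real)
qed

lemma qr_cancel: "t \<noteq> 0 \<Longrightarrow> qr t * w = 0 \<Longrightarrow> w = 0"
  by (simp add: quat_eq_iff)

lemma H_zd: fixes z w :: quat assumes "z \<noteq> 0" "z * w = 0" shows "w = 0"
proof -
  have "qcnj z * (z * w) = qr (nsq z) * w" by (simp add: mult.assoc[symmetric] cnj_mult')
  then have "qr (nsq z) * w = 0" using assms by simp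
  moreover have "nsq z \<noteq> 0" using assms nsq_zero by auto
  ultimately show ?thesis using qr_cancel by blast
qed

lemma H_I: "w * qI = qI * w \<Longrightarrow> iscx w"
  by (simp add: quat_eq_iff iscx_def)

lemma H_cxcomm: assumes "iscx y" "qi y \<noteq> 0" "y * z = z * y" shows "iscx z"
  using assms by (simp add: quat_eq_iff iscx_def)

lemma cx_mult: "iscx a \<Longrightarrow> iscx b \<Longrightarrow> iscx (a * b)" by (simp add: iscx_def)
lemma cx_cnj: "iscx a \<Longrightarrow> iscx (qcnj a)" by (simp add: iscx_def)
lemma cx_qr: "iscx (qr t)" by (simp add: iscx_def)

lemma C_real:
  fixes N c v d :: real
  assumes "N*N*d + (c/N)*(c/N)*v - c*c*d - v = 0" "c * c = N * N - N" "N > 0"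
  shows "v = N*N*d"
proof -
  have "N*N*(N*N*d) + c*c*v - N*N*c*c*d - N*N*v = 0" using assms(1,3)
    by (simp add: field_simps)
  then have "N*N*(N*N*d) + (N*N-N)*v - N*N*(N*N-N)*d - N*N*v = 0" using assms(2)
    by (simp add: algebra_simps)
  then have "N * (N*N*d - v) = 0" by (simp add: algebra_simps)
  then show ?thesis using assms(3) by simp
qed

lemma C_step:
  assumes "qr (N*N) * qI + qr (c/N) * W * qr (c/N) - qr c * qI * qr c - W = 0"
    "c * c = N * N - N" "N > 0"
  shows "W = qr (N*N) * qI"
proof -
  have e: "qre (qr (N*N) * qI + qr (c/N) * W * qr (c/N) - qr c * qI * qr c - W) = 0"
     "qi (qr (N*N) * qI + qr (c/N) * W * qr (c/N) - qr c * qI * qr c - W) = 0"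
     "qj (qr (N*N) * qI + qr (c/N) * W * qr (c/N) - qr c * qI * qr c - W) = 0"
     "qk (qr (N*N) * qI + qr (c/N) * W * qr (c/N) - qr c * qI * qr c - W) = 0"
    using assms(1) by simp_all
  have "qre W = N*N*0" by (rule C_real[OF _ assms(2,3)]) (use e(1) in \<open>simp add: algebra_simps\<close>)
  moreover have "qi W = N*N*1" by (rule C_real[OF _ assms(2,3)]) (use e(2) in \<open>simp add: algebra_simps\<close>)
  moreover have "qj W = N*N*0" by (rule C_real[OF _ assms(2,3)]) (use e(3) in \<open>simp add: algebra_simps\<close>)
  moreover have "qk W = N*N*0" by (rule C_real[OF _ assms(2,3)]) (use e(4) in \<open>simp add: algebra_simps\<close>)
  ultimately show ?thesis by (simp add: quat_eq_iff)
qed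


lemma cx_qr_cancel: "N \<noteq> 0 \<Longrightarrow> iscx (qr N * x) \<Longrightarrow> iscx x"
  by (simp add: iscx_def)

lemma nsq_cnj: "nsq (qcnj p) = nsq p" by (simp add: nsq_def)

lemma cnj_qr: "qcnj (qr t) = qr t" by (simp add: quat_eq_iff)

lemma qr_inj: "qr s = qr t \<longleftrightarrow> s = t" by (simp add: quat_eq_iff)

lemma sub_eq: "(a::quat) - b = c \<longleftrightarrow> a = b + c" by (auto simp: algebra_simps)

lemma forward_core:
  assumes E1: "qcnj p * p - qcnj r * r = 1" and E2: "qcnj p * q - qcnj r * s = 0"
    and F4: "s * qcnj s - r * qcnj r = 1"
    and A: "quat_is_real (q * qcnj p - s * qcnj r)"
    and B: "quat_is_real (q * qI * qcnj p - s * qI * qcnj r)"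
    and C: "p * qI * qcnj p + q * qI * qcnj q - r * qI * qcnj r - s * qI * qcnj s = 0"
  shows "iscx (qcnj p * q) \<and> iscx (qcnj p * r) \<and> iscx (qcnj p * s)"
proof -
  define N where "N = nsq p"
  define x where "x = qcnj p * q"
  define y where "y = qcnj p * r"
  define z where "z = qcnj p * s"
  have nE1: "nsq p = 1 + nsq r" using arg_cong[OF E1, of qre] by (simp add: cnj_mult' qr_def)
  have nF4: "nsq s = 1 + nsq r" using arg_cong[OF F4, of qre] by (simp add: mult_cnj qr_def)
  have Npos: "N > 0" using nE1 nsq_nonneg[of r] unfolding N_def by simp
  have nz: "nsq z = N * N" unfolding z_def N_def by (simp add: nsq_mult nsq_cnj nE1 nF4)
  have z0: "z \<noteq> 0"
  proof
    assume "z = 0"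
    then have "N * N = 0" using nz nsq_zero[of z] by simp
    with Npos show False by simp
  qed
  have cy: "qcnj y = qcnj r * p" unfolding y_def by (simp add: cnj_mult)
  have e2: "qcnj r * s = x" using E2 unfolding x_def by simp
  have K1: "qcnj y * z = qr N * x"
  proof -
    have "qcnj y * z = qcnj r * (p * qcnj p) * s" unfolding cy z_def by (simp add: mult.assoc)
    also have "\<dots> = qr N * (qcnj r * s)" unfolding N_def mult_cnj by (simp add: qr_comm mult.assoc)
    finally show ?thesis using e2 by simp
  qed
  have K2: "qcnj p * (q * qcnj p - s * qcnj r) * p = qcnj y * z - z * qcnj y"
  proof -
    have "qcnj p * (q * qcnj p - s * qcnj r) * p = x * (qcnj p * p) - z * (qcnj r * p)"
      unfolding x_def z_def by (simp add: algebra_simps)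
    also have "\<dots> = qr N * x - z * qcnj y" unfolding cnj_mult' N_def cy by (simp add: qr_comm)
    finally show ?thesis using K1 by simp
  qed
  have C1: "qcnj y * z = z * qcnj y" using H_comm H_conj[OF A, of p] K2 by metis
  have K3: "qcnj p * (q * qI * qcnj p - s * qI * qcnj r) * p = qcnj y * (z * qI) - (z * qI) * qcnj y"
  proof -
    have "qcnj p * (q * qI * qcnj p - s * qI * qcnj r) * p = x * qI * (qcnj p * p) - z * qI * (qcnj r * p)"
      unfolding x_def z_def by (simp add: algebra_simps)
    also have "\<dots> = qr N * x * qI - z * qI * qcnj y" unfolding cnj_mult' N_def cy
      by (simp add: qr_comm mult.assoc)
    also have "qr N * x * qI = qcnj y * (z * qI)" using K1 by (simp add: mult.assoc[symmetric])
    finally show ?thesis .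
  qed
  have C2: "qcnj y * (z * qI) = (z * qI) * qcnj y" using H_comm H_conj[OF B, of p] K3 by metis
  have "z * (qcnj y * qI - qI * qcnj y) = (qcnj y * z) * qI - z * qI * qcnj y"
    using C1 by (simp add: algebra_simps)
  also have "\<dots> = 0" using C2 by (simp add: mult.assoc)
  finally have "qcnj y * qI - qI * qcnj y = 0" using H_zd z0 by blast
  then have "iscx (qcnj y)" using H_I by simp
  then have cxy: "iscx y" using cx_cnj by fastforce
  have K4: "qr (N*N) * qI + x * qI * qcnj x - y * qI * qcnj y - z * qI * qcnj z = 0"
  proof -
    have L: "qcnj p * (a * qI * qcnj a) * p = (qcnj p * a) * qI * qcnj (qcnj p * a)" for a
      by (simp add: cnj_mult mult.assoc)
    have L2: "qcnj p * (A1 + A2 - A3 - A4) * p = qcnj p * A1 * p + qcnj p * A2 * p - qcnj p * A3 * p - qcnj p * A4 * p" for A1 A2 A3 A4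
      by (simp add: algebra_simps)
    have "qcnj p * (p * qI * qcnj p + q * qI * qcnj q - r * qI * qcnj r - s * qI * qcnj s) * p
      = (qcnj p * p) * qI * (qcnj p * p) + x * qI * qcnj x - y * qI * qcnj y - z * qI * qcnj z"
      unfolding L2 L x_def y_def z_def by (simp add: cnj_mult' cnj_qr)
    also have "(qcnj p * p) * qI * (qcnj p * p) = qr (N*N) * qI"
      unfolding cnj_mult' N_def by (metis mult.assoc qr_comm qr_mult)
    finally show ?thesis using C by simp
  qed
  show ?thesis
  proof (cases "qi y = 0")
    case False
    have "iscx z" using H_cxcomm[OF \<open>iscx (qcnj y)\<close> _ C1] False by simp
    moreover have "iscx x" using cx_qr_cancel[of N x] Npos K1 cx_mult[OF \<open>iscx (qcnj y)\<close> \<open>iscx z\<close>] by simp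
    ultimately show ?thesis using cxy unfolding x_def y_def z_def by simp
  next
    case True
    define c where "c = qre y"
    have yc: "y = qr c" using True cxy unfolding c_def iscx_def by (simp add: quat_eq_iff)
    have cc: "c * c = N * N - N"
    proof -
      have "nsq y = N * nsq r" unfolding y_def N_def by (simp add: nsq_mult nsq_cnj)
      moreover have "nsq y = c * c" unfolding yc by (simp add: nsq_def power2_eq_square)
      moreover have "nsq r = N - 1" using nE1 unfolding N_def by simp
      ultimately show ?thesis by (simp add: algebra_simps)
    qed
    have xz: "x = qr (c / N) * z"
    proof -
      have "qr (1/N) * (qr N * x) = qr (1/N) * (qr c * z)" using K1 yc by (simp add: qcnj_def qr_def)
      then show ?thesis using Npos by (simp add: mult.assoc[symmetric] qr_mult qr_1)
    qed
    define W where "W = z * qI * qcnj z"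
    have "qr (N*N) * qI + qr (c/N) * W * qr (c/N) - qr c * qI * qr c - W = 0"
      using K4 unfolding xz yc W_def by (simp add: cnj_mult mult.assoc cnj_qr)
    then have W: "W = qr (N*N) * qI" using C_step cc Npos by blast
    have "qr (N*N) * (z * qI) = qr (N*N) * (qI * z)"
    proof -
      have "qr (N*N) * (z * qI) = z * qI * (qcnj z * z)" unfolding cnj_mult' nz by (rule qr_comm)
      also have "\<dots> = W * z" unfolding W_def by (simp add: mult.assoc)
      also have "\<dots> = qr (N*N) * (qI * z)" unfolding W by (simp add: mult.assoc)
      finally show ?thesis .
    qed
    then have "qr (N*N) * (z * qI - qI * z) = 0" by (simp add: algebra_simps)
    then have "z * qI - qI * z = 0" using qr_cancel Npos by (metis mult_pos_pos less_irrefl)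
    then have "iscx z" using H_I by simp
    moreover have "iscx x" unfolding xz using cx_mult[OF cx_qr \<open>iscx z\<close>] .
    ultimately show ?thesis using cxy unfolding x_def y_def z_def by simp
  qed
qed



lemma trace_formula:
  "qmtrace (qmmult (qmmult (QM p q r s) (QM a b c d)) (Jm (QM p q r s)))
   = (p*a+q*c)*qcnj p - (p*b+q*d)*qcnj q - (r*a+s*c)*qcnj r + (r*b+s*d)*qcnj s"
  by (simp add: qmtrace_def qmmult_def Jm_def qops algebra_simps)

lemma SU11_I: assumes "a*d - b*c = 1" "cnj a*a - cnj c*c = 1" "cnj a*b - cnj c*d = 0"
   "cnj b*a - cnj d*c = 0" "cnj b*b - cnj d*d = -1"
  shows "QM (qoc a) (qoc b) (qoc c) (qoc d) \<in> SU11"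
proof -
  have "qmmult (qmmult (qmstar (QM (qoc a) (qoc b) (qoc c) (qoc d))) I11) (QM (qoc a) (qoc b) (qoc c) (qoc d)) = I11"
    unfolding star_I_cx unfolding I11_cx using assms by simp
  then show ?thesis unfolding SU11_def using assms(1) by blast
qed

definition U1 where "U1 = QM (qoc (5/4)) (qoc (3/4)) (qoc (3/4)) (qoc (5/4))"
definition U2 where "U2 = QM (qoc (5/4)) (qoc (\<i> * 3/4)) (qoc (- \<i> * 3/4)) (qoc (5/4))"
definition U3 where "U3 = QM (qoc \<i>) (qoc 0) (qoc 0) (qoc (- \<i>))"

lemma U_in: "U1 \<in> SU11" "U2 \<in> SU11" "U3 \<in> SU11"
  unfolding U1_def U2_def U3_def by (rule SU11_I; simp add: complex_eq_iff)+

lemma exA_id: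
  fixes p q r s :: quat
  defines "T \<equiv> (p*qoc (5/4)+q*qoc (3/4))*qcnj p - (p*qoc (3/4)+q*qoc (5/4))*qcnj q
     - (r*qoc (5/4)+s*qoc (3/4))*qcnj r + (r*qoc (3/4)+s*qoc (5/4))*qcnj s"
    and "X \<equiv> q * qcnj p - s * qcnj r"
  shows "qi T = 3/2 * qi X" "qj T = 3/2 * qj X" "qk T = 3/2 * qk X"
  unfolding T_def X_def by (simp_all add: algebra_simps)


lemma exB_id:
  fixes p q r s :: quat
  defines "T \<equiv> (p*qoc (5/4)+q*qoc (- \<i> * 3/4))*qcnj p - (p*qoc (\<i> * 3/4)+q*qoc (5/4))*qcnj q
     - (r*qoc (5/4)+s*qoc (- \<i> * 3/4))*qcnj r + (r*qoc (\<i> * 3/4)+s*qoc (5/4))*qcnj s"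
    and "X \<equiv> q * qI * qcnj p - s * qI * qcnj r"
  shows "qi T = -3/2 * qi X" "qj T = -3/2 * qj X" "qk T = -3/2 * qk X"
  unfolding T_def X_def by (simp_all add: algebra_simps)

lemma exC_id:
  fixes p q r s :: quat
  defines "T \<equiv> (p*qoc \<i>+q*qoc 0)*qcnj p - (p*qoc 0+q*qoc (- \<i>))*qcnj q
     - (r*qoc \<i>+s*qoc 0)*qcnj r + (r*qoc 0+s*qoc (- \<i>))*qcnj s"
  shows "T = p * qI * qcnj p + q * qI * qcnj q - r * qI * qcnj r - s * qI * qcnj s" "qre T = 0"
  unfolding T_def by (simp_all add: quat_eq_iff algebra_simps)

lemma cx_qoc: "iscx w \<Longrightarrow> w = qoc (Complex (qre w) (qi w))"
  by (simp add: iscx_def quat_eq_iff)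

lemma scal_cancel: "nsq k = 1 \<Longrightarrow> qmmult (qscalar k) (qmmult (qscalar (qcnj k)) g) = g"
  by (cases g) (simp add: qmmult_def qscalar_def qops mult.assoc[symmetric] mult_cnj qr_1)

lemma scalar_star: assumes "nsq k = 1"
  shows "qmmult (qmmult (qmstar (qmmult (qscalar k) g)) I11) (qmmult (qscalar k) g) = qmmult (qmmult (qmstar g) I11) g"
proof -
  have ck: "qcnj k * (k * X) = X" for X using assms by (simp add: mult.assoc[symmetric] cnj_mult' qr_1)
  show ?thesis
    by (cases g) (simp add: qmmult_def qmstar_def qscalar_def I11_def qops cnj_mult algebra_simps ck)
qed



lemma forward:
  assumes g: "g \<in> Sp11"
    and H: "\<forall>u \<in> SU11. quat_is_real (qmtrace (qmmult (qmmult g u) (qminv g)))"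
  shows "\<exists>h \<in> Sp1. \<exists>u \<in> SU11. g = qmmult (qscalar h) u"
proof -
  obtain p q r s where gq: "g = QM p q r s" by (cases g)
  have inv: "qminv g = Jm g" using Sp11_inv(3)[OF g] .
  have H': "\<forall>u \<in> SU11. quat_is_real (qmtrace (qmmult (qmmult (QM p q r s) u) (Jm (QM p q r s))))"
    using H unfolding inv unfolding gq .
  have S: "qmmult (qmmult (qmstar g) I11) g = I11" using g by (simp add: Sp11_def)
  have E1: "qcnj p * p - qcnj r * r = 1"
    using arg_cong[OF S, of m11] unfolding gq by (simp add: qmmult_def qmstar_def I11_def qops)
  have E2: "qcnj p * q - qcnj r * s = 0"
    using arg_cong[OF S, of m12] unfolding gq by (simp add: qmmult_def qmstar_def I11_def qops)
  have F4: "s * qcnj s - r * qcnj r = 1"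
    using arg_cong[OF Sp11_inv(2)[OF g], of m22] unfolding gq by (simp add: qmmult_def Jm_def qmid_def qops)
  have TA: "quat_is_real ((p*qoc (5/4)+q*qoc (3/4))*qcnj p - (p*qoc (3/4)+q*qoc (5/4))*qcnj q
     - (r*qoc (5/4)+s*qoc (3/4))*qcnj r + (r*qoc (3/4)+s*qoc (5/4))*qcnj s)"
    using bspec[OF H' U_in(1)] unfolding U1_def trace_formula .
  have A: "quat_is_real (q * qcnj p - s * qcnj r)"
    using TA exA_id[of p q r s] unfolding quat_is_real_def by simp
  have TB: "quat_is_real ((p*qoc (5/4)+q*qoc (- \<i> * 3/4))*qcnj p - (p*qoc (\<i> * 3/4)+q*qoc (5/4))*qcnj q
     - (r*qoc (5/4)+s*qoc (- \<i> * 3/4))*qcnj r + (r*qoc (\<i> * 3/4)+s*qoc (5/4))*qcnj s)"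
    using bspec[OF H' U_in(2)] unfolding U2_def trace_formula .
  have B: "quat_is_real (q * qI * qcnj p - s * qI * qcnj r)"
    using TB exB_id[of p q r s] unfolding quat_is_real_def by simp
  have TC: "quat_is_real ((p*qoc \<i>+q*qoc 0)*qcnj p - (p*qoc 0+q*qoc (- \<i>))*qcnj q
     - (r*qoc \<i>+s*qoc 0)*qcnj r + (r*qoc 0+s*qoc (- \<i>))*qcnj s)"
    using bspec[OF H' U_in(3)] unfolding U3_def trace_formula .
  have C: "p * qI * qcnj p + q * qI * qcnj q - r * qI * qcnj r - s * qI * qcnj s = 0"
    using TC exC_id[of p q r s] unfolding quat_is_real_def by (simp add: quat_eq_iff)
  have core: "iscx (qcnj p * q) \<and> iscx (qcnj p * r) \<and> iscx (qcnj p * s)"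
    using forward_core[OF E1 E2 F4 A B C] .
  define N where "N = nsq p"
  have nE1: "nsq p = 1 + nsq r" using arg_cong[OF E1, of qre] by (simp add: cnj_mult' qr_def)
  have Npos: "N > 0" using nE1 nsq_nonneg[of r] unfolding N_def by simp
  define h0 where "h0 = qr (1 / sqrt N) * p"
  have nh0: "nsq h0 = 1" unfolding h0_def using Npos
    by (simp add: nsq_mult N_def) (simp add: nsq_def power_divide)
  have ch0: "qcnj h0 * w = qr (1 / sqrt N) * (qcnj p * w)" for w
    unfolding h0_def by (simp add: cnj_mult cnj_qr qr_comm mult.assoc)
  have cx: "iscx (qcnj h0 * p)" "iscx (qcnj h0 * q)" "iscx (qcnj h0 * r)" "iscx (qcnj h0 * s)"
    unfolding ch0 using core cx_mult[OF cx_qr] by (auto simp: cnj_mult' cx_qr)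
  define u' where "u' = qmmult (qscalar (qcnj h0)) g"
  have u'e: "u' = QM (qcnj h0 * p) (qcnj h0 * q) (qcnj h0 * r) (qcnj h0 * s)"
    unfolding u'_def gq by (simp add: qmmult_def qscalar_def qops)
  have nch0: "nsq (qcnj h0) = 1" using nh0 by (simp add: nsq_cnj)
  have gu: "g = qmmult (qscalar h0) u'" unfolding u'_def
    using scal_cancel[OF nh0] by simp
  have Su: "qmmult (qmmult (qmstar u') I11) u' = I11"
    unfolding u'_def scalar_star[OF nch0] using S .
  obtain a b c d where abcd: "u' = QM (qoc a) (qoc b) (qoc c) (qoc d)"
    using u'e cx_qoc[OF cx(1)] cx_qoc[OF cx(2)] cx_qoc[OF cx(3)] cx_qoc[OF cx(4)] by metis
  show ?thesis using assemble[OF nh0, of g a b c d] gu Su unfolding abcd by blast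
qed

theorem proposition4p3:
  assumes "g \<in> Sp11"
  shows "(\<forall>u \<in> SU11. quat_is_real (qmtrace (qmmult (qmmult g u) (qminv g))))
         \<longleftrightarrow> (\<exists>h \<in> Sp1. \<exists>u \<in> SU11. g = qmmult (qscalar h) u)"
  using forward[OF assms] backward[OF assms] by blast

end
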